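(* For $1\le r\le n$, $$b_{n,2}(\Delta_{n-r})=\frac{n!}{(n-r)!}.$$
   Context: $B_n^+$ is the positive braid monoid with generators $\sigma_1,\dots,\sigma_{n-1}$ and relations $\sigma_i\sigma_j=\sigma_j\sigma_i$ ($|i-j|\ge2$), $\sigma_i\sigma_j\sigma_i=\sigma_j\sigma_i\sigma_j$ ($|i-j|=1$). $\Delta_1=1$, $\Delta_m=\sigma_1\cdots\sigma_{m-1}\Delta_{m-1}$, with the convention $\Delta_0=1$; $\Delta_m$ is viewed in $B_n^+$ for $m\le n$. Simple $n$-braids are the left (equivalently right) divisors of $\Delta_n$ in $B_n^+$. For simple $x$, $D_L(x)$ (resp. $D_R(x)$) is the set of $i\in\{1,\dots,n-1\}$ with $\sigma_i$ a left (resp. right) divisor of $x$. A sequence $(x_1,\dots,x_d)$ of simple $n$-braids is normal if $x_k=\gcd(\Delta_n,x_k\cdots x_d)$ (greatest common left divisor) for each $k$; equivalently $D_R(x_k)\supseteq D_L(x_{k+1})$ for all $k<d$. For a simple $n$-braid $x$, $b_{n,d}(x)$ is the number of normal sequences $(x_1,\dots,x_{d-1},x)$ of simple $n$-braids. *)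

theory Defs
  imports Main
begin

(* Positive braid words on n strands: lists over the generator indices 1..n-1
   (the letter i stands for sigma_i). *)
definition gens :: "nat \<Rightarrow> nat set" where
  "gens n = {1..<n}"

definition braid_rel :: "nat \<Rightarrow> (nat list \<times> nat list) set" where
  "braid_rel n =
     {([i, j], [j, i]) | i j. i \<in> gens n \<and> j \<in> gens n \<and> (i \<ge> j + 2 \<or> j \<ge> i + 2)} \<union>
     {([i, j, i], [j, i, j]) | i j. i \<in> gens n \<and> j \<in> gens n \<and> (i = j + 1 \<or> j = i + 1)}"

definition braid_step :: "nat \<Rightarrow> (nat list \<times> nat list) set" where
  "braid_step n = {(u @ a @ v, u @ b @ v) | u a b v.
      u \<in> lists (gens n) \<and> v \<in> lists (gens n) \<and> (a, b) \<in> braid_rel n}"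

definition braid_eq :: "nat \<Rightarrow> (nat list \<times> nat list) set" where
  "braid_eq n = (braid_step n \<union> (braid_step n)\<inverse>)\<^sup>*"

(* the element of B_n^+ represented by a word *)
definition braid_cls :: "nat \<Rightarrow> nat list \<Rightarrow> nat list set" where
  "braid_cls n w = {v \<in> lists (gens n). (w, v) \<in> braid_eq n}"

definition left_div :: "nat \<Rightarrow> nat list \<Rightarrow> nat list \<Rightarrow> bool" where
  "left_div n x y \<longleftrightarrow> (\<exists>z \<in> lists (gens n). (x @ z, y) \<in> braid_eq n)"

definition right_div :: "nat \<Rightarrow> nat list \<Rightarrow> nat list \<Rightarrow> bool" where
  "right_div n x y \<longleftrightarrow> (\<exists>z \<in> lists (gens n). (z @ x, y) \<in> braid_eq n)"

fun Delta :: "nat \<Rightarrow> nat list" where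
  "Delta 0 = []"
| "Delta (Suc m) = [1..<Suc m] @ Delta m"

definition simple :: "nat \<Rightarrow> nat list \<Rightarrow> bool" where
  "simple n x \<longleftrightarrow> x \<in> lists (gens n) \<and> left_div n x (Delta n)"

definition DL :: "nat \<Rightarrow> nat list \<Rightarrow> nat set" where
  "DL n x = {i \<in> gens n. left_div n [i] x}"

definition DR :: "nat \<Rightarrow> nat list \<Rightarrow> nat set" where
  "DR n x = {i \<in> gens n. right_div n [i] x}"

definition normal_seq :: "nat \<Rightarrow> nat list list \<Rightarrow> bool" where
  "normal_seq n ws \<longleftrightarrow> (\<forall>w \<in> set ws. simple n w) \<and>
     (\<forall>k. Suc k < length ws \<longrightarrow> DL n (ws ! Suc k) \<subseteq> DR n (ws ! k))"

(* b_{n,d}(x): number of normal sequences (x_1,...,x_{d-1},x) of simple braids,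
   counted as sequences of elements of B_n^+ (equivalence classes of words) *)
definition b :: "nat \<Rightarrow> nat \<Rightarrow> nat list \<Rightarrow> nat" where
  "b n d x = card {map (braid_cls n) ws | ws.
      length ws = d \<and> normal_seq n ws \<and> (last ws, x) \<in> braid_eq n}"

end

theory Submission
  imports Defs
begin


fun swp :: "nat \<Rightarrow> nat list \<Rightarrow> nat list" where
  "swp 0 (x # y # zs) = y # x # zs"
| "swp (Suc k) (x # xs) = x # swp k xs"
| "swp _ xs = xs"

fun invs :: "nat list \<Rightarrow> nat" where
  "invs [] = 0"
| "invs (x # xs) = length (filter (\<lambda>y. y < x) xs) + invs xs"

lemma swp_length[simp]: "length (swp k L) = length L"
  by (induction k L rule: swp.induct) auto

lemma swp_set[simp]: "set (swp k L) = set L"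
  by (induction k L rule: swp.induct) auto

lemma swp_distinct[simp]: "distinct (swp k L) = distinct L"
  by (induction k L rule: swp.induct) auto

lemma swp_filter[simp]: "length (filter Q (swp k L)) = length (filter Q L)"
  by (induction k L rule: swp.induct) auto

lemma swp_upd: "Suc k < length L \<Longrightarrow> swp k L = L[k := L ! Suc k, Suc k := L ! k]"
  by (induction k L rule: swp.induct) auto

lemma swp_swp[simp]: "swp k (swp k L) = L"
  by (induction k L rule: swp.induct) (auto elim: swp.elims)

lemma swp_append: "swp (length xs + k) (xs @ ys) = xs @ swp k ys"
  by (induction xs) auto

lemma swp_invs_gen:
  "distinct L \<Longrightarrow> Suc k < length L \<Longrightarrow>
   invs (swp k L) + (if L ! k > L ! Suc k then 1 else 0) = invs L + (if L ! k < L ! Suc k then 1 else 0)"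
proof (induction k L rule: swp.induct)
  case (1 x y zs)
  then show ?case by auto
next
  case (2 k x xs)
  then show ?case by auto
qed auto

lemma swp_invs_dec: "distinct L \<Longrightarrow> Suc k < length L \<Longrightarrow> L ! k > L ! Suc k \<Longrightarrow> invs (swp k L) + 1 = invs L"
  using swp_invs_gen[of L k] by auto

lemma swp_invs_inc: "distinct L \<Longrightarrow> Suc k < length L \<Longrightarrow> L ! k < L ! Suc k \<Longrightarrow> invs (swp k L) = invs L + 1"
  using swp_invs_gen[of L k] by auto

lemma swp_invs_le: "distinct L \<Longrightarrow> Suc k < length L \<Longrightarrow> invs (swp k L) \<le> invs L + 1"
  using swp_invs_gen[of L k] by (auto split: if_splits)

lemma swp_comm:
  assumes "Suc k < length L" "Suc j < length L" "Suc k < j \<or> Suc j < k"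
  shows "swp k (swp j L) = swp j (swp k L)"
  using assms by (auto simp: swp_upd nth_list_update intro!: nth_equalityI)

lemma swp_braid:
  assumes "Suc (Suc k) < length L"
  shows "swp k (swp (Suc k) (swp k L)) = swp (Suc k) (swp k (swp (Suc k) L))"
  using assms by (auto simp: swp_upd nth_list_update intro!: nth_equalityI)

definition act :: "nat list \<Rightarrow> nat list \<Rightarrow> nat list" where
  "act w L = fold (\<lambda>i. swp (i - 1)) w L"

lemma act_Nil[simp]: "act [] L = L" by (simp add: act_def)
lemma act_Cons[simp]: "act (i # w) L = act w (swp (i - 1) L)" by (simp add: act_def)
lemma act_append[simp]: "act (u @ v) L = act v (act u L)" by (simp add: act_def)
lemma act_length[simp]: "length (act w L) = length L" by (induction w arbitrary: L) auto
lemma act_set[simp]: "set (act w L) = set L" by (induction w arbitrary: L) auto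
lemma act_distinct[simp]: "distinct (act w L) = distinct L" by (induction w arbitrary: L) auto

lemma rel_act: "(pa, pb) \<in> braid_rel n \<Longrightarrow> length L = n \<Longrightarrow> act pa L = act pb L"
proof -
  assume ab: "(pa, pb) \<in> braid_rel n" and len: "length L = n"
  from ab consider (c) i j where "pa = [i, j]" "pb = [j, i]" "i \<in> gens n" "j \<in> gens n" "i \<ge> j + 2 \<or> j \<ge> i + 2"
    | (bb) i j where "pa = [i, j, i]" "pb = [j, i, j]" "i \<in> gens n" "j \<in> gens n" "i = j + 1 \<or> j = i + 1"
    unfolding braid_rel_def by blast
  then show ?thesis
  proof cases
    case c
    have "swp (i - 1) (swp (j - 1) L) = swp (j - 1) (swp (i - 1) L)"
      by (rule swp_comm) (use c len in \<open>auto simp: gens_def\<close>)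
    then show ?thesis using c by simp
  next
    case bb
    then show ?thesis using len swp_braid[of "i - 1" L] swp_braid[of "j - 1" L]
      by (auto simp: gens_def)
  qed
qed

lemma rel_set: "(pa, pb) \<in> braid_rel n \<Longrightarrow> set pa = set pb \<and> length pa = length pb \<and> set pa \<subseteq> gens n \<and> set pb \<subseteq> gens n"
  unfolding braid_rel_def by auto

lemma rel_rev: "(pa, pb) \<in> braid_rel n \<Longrightarrow> (rev pa, rev pb) \<in> braid_rel n"
  unfolding braid_rel_def by auto

lemma step_inv: "(x, y) \<in> braid_step n \<Longrightarrow>
  length x = length y \<and> set x = set y \<and> (\<forall>L. length L = n \<longrightarrow> act x L = act y L)
  \<and> x \<in> lists (gens n) \<and> y \<in> lists (gens n)"
  unfolding braid_step_def using rel_act rel_set by fastforce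

lemma beq_inv: "(x, y) \<in> braid_eq n \<Longrightarrow>
  length x = length y \<and> set x = set y \<and> (\<forall>L. length L = n \<longrightarrow> act x L = act y L)"
  unfolding braid_eq_def
proof (induction rule: rtrancl_induct)
  case base then show ?case by simp
next
  case (step y z)
  then show ?case using step_inv[of y z n] step_inv[of z y n] by auto
qed

lemma beq_lists: "(x, y) \<in> braid_eq n \<Longrightarrow> x \<in> lists (gens n) \<Longrightarrow> y \<in> lists (gens n)"
  unfolding braid_eq_def
proof (induction rule: rtrancl_induct)
  case base then show ?case by simp
next
  case (step y z)
  then show ?case using step_inv[of y z n] step_inv[of z y n] by auto
qed

lemma beq_refl[simp]: "(x, x) \<in> braid_eq n"
  unfolding braid_eq_def by simp

lemma beq_trans: "(x, y) \<in> braid_eq n \<Longrightarrow> (y, z) \<in> braid_eq n \<Longrightarrow> (x, z) \<in> braid_eq n"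
  unfolding braid_eq_def by (rule rtrancl_trans)

lemma beq_sym: "(x, y) \<in> braid_eq n \<Longrightarrow> (y, x) \<in> braid_eq n"
  unfolding braid_eq_def
proof (induction rule: rtrancl_induct)
  case base then show ?case by simp
next
  case (step y z)
  then have "(z, y) \<in> (braid_step n \<union> (braid_step n)\<inverse>)\<^sup>*" by blast
  then show ?case using step(3) by (rule rtrancl_trans)
qed

lemma beq_stepI: "u \<in> lists (gens n) \<Longrightarrow> v \<in> lists (gens n) \<Longrightarrow> (pa, pb) \<in> braid_rel n \<Longrightarrow>
  (u @ pa @ v, u @ pb @ v) \<in> braid_eq n"
  unfolding braid_eq_def braid_step_def by blast

lemma beq_map:
  assumes "\<And>x y. (x, y) \<in> braid_step n \<Longrightarrow> (f x, f y) \<in> braid_eq n"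
  shows "(x, y) \<in> braid_eq n \<Longrightarrow> (f x, f y) \<in> braid_eq n"
proof -
  assume "(x, y) \<in> braid_eq n"
  then show ?thesis
    unfolding braid_eq_def
  proof (induction rule: rtrancl_induct)
    case base then show ?case by simp
  next
    case (step y z)
    then have "(f y, f z) \<in> braid_eq n"
      using assms beq_sym by blast
    then show ?case using step(3) by (metis beq_trans braid_eq_def)
  qed
qed

lemma beq_rev: "(x, y) \<in> braid_eq n \<Longrightarrow> (rev x, rev y) \<in> braid_eq n"
proof (rule beq_map[where f = rev])
  fix x y assume "(x, y) \<in> braid_step n"
  then obtain u pa pb v where "x = u @ pa @ v" "y = u @ pb @ v" "u \<in> lists (gens n)" "v \<in> lists (gens n)"
    "(pa, pb) \<in> braid_rel n" unfolding braid_step_def by blast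
  moreover have "rev v \<in> lists (gens n)" "rev u \<in> lists (gens n)" using \<open>u \<in> lists (gens n)\<close> \<open>v \<in> lists (gens n)\<close> by auto
  ultimately show "(rev x, rev y) \<in> braid_eq n"
    using beq_stepI[of "rev v" n "rev u" "rev pa" "rev pb"] rel_rev by auto
qed

lemma beq_app_right: "(x, y) \<in> braid_eq n \<Longrightarrow> z \<in> lists (gens n) \<Longrightarrow> (x @ z, y @ z) \<in> braid_eq n"
proof (rule beq_map[where f = "\<lambda>x. x @ z"])
  fix x y assume "(x, y) \<in> braid_step n" "z \<in> lists (gens n)"
  then obtain u pa pb v where "x = u @ pa @ v" "y = u @ pb @ v" "u \<in> lists (gens n)" "v \<in> lists (gens n)"
    "(pa, pb) \<in> braid_rel n" unfolding braid_step_def by blast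
  then show "(x @ z, y @ z) \<in> braid_eq n"
    using beq_stepI[of u n "v @ z" pa pb] \<open>z \<in> lists (gens n)\<close> by auto
qed

lemma beq_app_left: "(x, y) \<in> braid_eq n \<Longrightarrow> z \<in> lists (gens n) \<Longrightarrow> (z @ x, z @ y) \<in> braid_eq n"
proof (rule beq_map[where f = "\<lambda>x. z @ x"])
  fix x y assume "(x, y) \<in> braid_step n" "z \<in> lists (gens n)"
  then obtain u pa pb v where "x = u @ pa @ v" "y = u @ pb @ v" "u \<in> lists (gens n)" "v \<in> lists (gens n)"
    "(pa, pb) \<in> braid_rel n" unfolding braid_step_def by blast
  then show "(z @ x, z @ y) \<in> braid_eq n"
    using beq_stepI[of "z @ u" n v pa pb] \<open>z \<in> lists (gens n)\<close> by auto
qed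

definition P :: "nat \<Rightarrow> nat list \<Rightarrow> nat list" where
  "P n w = act w [0..<n]"

lemma P_length[simp]: "length (P n w) = n" by (simp add: P_def)
lemma P_set[simp]: "set (P n w) = {0..<n}" by (simp add: P_def)
lemma P_distinct[simp]: "distinct (P n w)" by (simp add: P_def)
lemma P_snoc[simp]: "P n (w @ [i]) = swp (i - 1) (P n w)" by (simp add: P_def)
lemma P_append: "P n (u @ v) = act v (P n u)" by (simp add: P_def)

lemma gens_iff: "i \<in> gens n \<longleftrightarrow> 1 \<le> i \<and> i < n" by (auto simp: gens_def)

lemma sorted_invs: "sorted L \<Longrightarrow> invs L = 0"
proof (induction L)
  case (Cons x xs)
  then have "filter (\<lambda>y. y < x) xs = []" by (auto simp: filter_empty_conv)
  then show ?case using Cons by simp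
qed simp

lemma invs_zero_sorted: "invs L = 0 \<Longrightarrow> sorted L"
proof (induction L)
  case (Cons x xs)
  then have "filter (\<lambda>y. y < x) xs = []" by simp
  then have "\<forall>y\<in>set xs. x \<le> y" by (auto simp: filter_empty_conv)
  then show ?case using Cons by simp
qed simp

lemma act_invs_le: "z \<in> lists (gens n) \<Longrightarrow> distinct L \<Longrightarrow> length L = n \<Longrightarrow> invs (act z L) \<le> invs L + length z"
proof (induction z arbitrary: L)
  case (Cons i z)
  have "invs (swp (i - 1) L) \<le> invs L + 1"
    by (rule swp_invs_le) (use Cons.prems in \<open>auto simp: gens_iff\<close>)
  moreover have "invs (act z (swp (i - 1) L)) \<le> invs (swp (i - 1) L) + length z"
    by (rule Cons.IH) (use Cons.prems in auto)
  ultimately show ?case by simp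
qed simp

lemma P_invs_le: "w \<in> lists (gens n) \<Longrightarrow> invs (P n w) \<le> length w"
  using act_invs_le[of w n "[0..<n]"] by (simp add: P_def sorted_invs)

lemma P_app_invs_le: "z \<in> lists (gens n) \<Longrightarrow> invs (P n (x @ z)) \<le> invs (P n x) + length z"
  using act_invs_le[of z n "P n x"] by (simp add: P_append)

lemma perm_length: "distinct L \<Longrightarrow> set L = {0..<n} \<Longrightarrow> length L = n"
  using distinct_card by fastforce

lemma exists_word: "distinct L \<Longrightarrow> set L = {0..<n} \<Longrightarrow> \<exists>w \<in> lists (gens n). P n w = L \<and> length w = invs L"
proof (induction "invs L" arbitrary: L rule: less_induct)
  case less
  have len: "length L = n" using perm_length less.prems by blast
  show ?case
  proof (cases "\<exists>k. Suc k < length L \<and> L ! k > L ! Suc k")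
    case True
    then obtain k where k: "Suc k < length L" "L ! k > L ! Suc k" by blast
    have dec: "invs (swp k L) + 1 = invs L" using swp_invs_dec[OF less.prems(1) k] .
    then obtain w' where w': "w' \<in> lists (gens n)" "P n w' = swp k L" "length w' = invs (swp k L)"
      using less.hyps[of "swp k L"] less.prems by auto
    have "Suc k \<in> gens n" using k len by (auto simp: gens_iff)
    then show ?thesis using w' dec
      by (intro bexI[of _ "w' @ [Suc k]"]) auto
  next
    case False
    then have "sorted L" unfolding sorted_iff_nth_Suc by (metis not_less)
    moreover have "L = [0..<n]"
      by (rule sorted_distinct_set_unique) (use less.prems \<open>sorted L\<close> in auto)
    ultimately show ?thesis by (intro bexI[of _ "[]"]) (auto simp: P_def sorted_invs)
  qed
qed

lemma reduced_snoc:
  assumes "w @ [i] \<in> lists (gens n)" "invs (P n (w @ [i])) = Suc (length w)"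
  shows "invs (P n w) = length w" "P n w ! (i - 1) < P n w ! i" "P n (w @ [i]) ! (i - 1) > P n (w @ [i]) ! i"
proof -
  have i: "1 \<le> i" "i < n" using assms(1) by (auto simp: gens_iff)
  have le: "invs (P n w) \<le> length w" using assms(1) P_invs_le by auto
  have g: "invs (swp (i - 1) (P n w)) + (if P n w ! (i - 1) > P n w ! Suc (i - 1) then 1 else 0)
      = invs (P n w) + (if P n w ! (i - 1) < P n w ! Suc (i - 1) then 1 else 0)"
    by (rule swp_invs_gen) (use i in auto)
  have ne: "P n w ! (i - 1) \<noteq> P n w ! Suc (i - 1)"
    using i by (simp add: nth_eq_iff_index_eq)
  have si: "Suc (i - 1) = i" using i by simp
  show 1: "invs (P n w) = length w" and 2: "P n w ! (i - 1) < P n w ! i"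
    using g le assms(2) ne si by (auto split: if_splits)
  show "P n (w @ [i]) ! (i - 1) > P n (w @ [i]) ! i"
    using 2 i by (simp add: swp_upd nth_list_update)
qed

lemma matsumoto:
  assumes "w \<in> lists (gens n)" "w' \<in> lists (gens n)" "P n w = P n w'"
    "invs (P n w) = length w" "length w' = length w"
  shows "(w, w') \<in> braid_eq n"
  using assms
proof (induction "length w" arbitrary: w w' rule: less_induct)
  case less
  have ih: "\<And>a c. length a < length w \<Longrightarrow> a \<in> lists (gens n) \<Longrightarrow> c \<in> lists (gens n) \<Longrightarrow>
     P n a = P n c \<Longrightarrow> invs (P n a) = length a \<Longrightarrow> length c = length a \<Longrightarrow> (a, c) \<in> braid_eq n"
    using less.hyps by blast
  show ?case
  proof (cases w rule: rev_cases)
    case Nil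
    then show ?thesis using less.prems by simp
  next
    case (snoc u i)
    obtain u' j where w': "w' = u' @ [j]"
      using less.prems(5) snoc by (cases w' rule: rev_cases) auto
    define L where "L = P n w"
    have Ld: "distinct L" "set L = {0..<n}" "length L = n" by (auto simp: L_def)
    have ul: "u \<in> lists (gens n)" "i \<in> gens n" "u' \<in> lists (gens n)" "j \<in> gens n"
      using less.prems snoc w' by auto
    have lenu: "length u' = length u" using less.prems(5) snoc w' by simp
    have r1: "invs (P n (u @ [i])) = Suc (length u)" using less.prems(4) snoc by simp
    have r2: "invs (P n (u' @ [j])) = Suc (length u')" using less.prems(3,4) snoc w' lenu by simp
    have Lw: "L = P n (u @ [i])" "L = P n (u' @ [j])" using less.prems(3) snoc w' by (auto simp: L_def)
    have iu: "invs (P n u) = length u" "L ! (i - 1) > L ! i"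
      using reduced_snoc[of u i n] r1 ul Lw by auto
    have iu': "invs (P n u') = length u'" "L ! (j - 1) > L ! j"
      using reduced_snoc[of u' j n] r2 ul Lw by auto
    have Pu: "P n u = swp (i - 1) L" "P n u' = swp (j - 1) L" by (simp add: Lw(1), simp add: Lw(2))
    have invL: "invs L = Suc (length u)" using r1 Lw by simp
    have lw: "length w = Suc (length u)" using snoc by simp
    have three: "\<And>i j u u'. u \<in> lists (gens n) \<Longrightarrow> u' \<in> lists (gens n) \<Longrightarrow> i \<in> gens n \<Longrightarrow> j \<in> gens n \<Longrightarrow>
        P n u = swp (i - 1) L \<Longrightarrow> P n u' = swp (j - 1) L \<Longrightarrow> length u' = length u \<Longrightarrow>
        invs (P n u) = length u \<Longrightarrow> invs L = Suc (length u) \<Longrightarrow> length w = Suc (length u) \<Longrightarrow>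
        L ! (i - 1) > L ! i \<Longrightarrow> L ! (j - 1) > L ! j \<Longrightarrow> j = Suc i \<Longrightarrow> (u @ [i], u' @ [j]) \<in> braid_eq n"
    proof -
      fix i j u u'
      assume u: "u \<in> lists (gens n)" and u': "u' \<in> lists (gens n)" and i: "i \<in> gens n" and j: "j \<in> gens n"
        and Pu: "P n u = swp (i - 1) L" and Pu': "P n u' = swp (j - 1) L" and lu: "length u' = length u"
        and iu: "invs (P n u) = length u" and iL: "invs L = Suc (length u)" and lw: "length w = Suc (length u)"
        and di: "L ! (i - 1) > L ! i" and dj: "L ! (j - 1) > L ! j" and ji: "j = Suc i"
      define k where "k = i - 1"
      have kk: "i = Suc k" "j = Suc (Suc k)" "Suc (Suc k) < n" using i j ji by (auto simp: k_def gens_iff)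
      have d1: "L ! k > L ! Suc k" "L ! Suc k > L ! Suc (Suc k)" using di dj kk by auto
      define L1 where "L1 = swp k L"
      define L2 where "L2 = swp (Suc k) L1"
      define Q where "Q = swp k L2"
      have e1: "invs L1 + 1 = invs L" unfolding L1_def
        by (rule swp_invs_dec) (use Ld kk d1 in auto)
      have dL: "distinct L1" "distinct L2" using Ld by (auto simp: L1_def L2_def)
      have e2: "invs L2 + 1 = invs L1" unfolding L2_def
        by (rule swp_invs_dec[OF dL(1)]) (use Ld kk d1 in \<open>auto simp: L1_def swp_upd nth_list_update\<close>)
      have e3: "invs Q + 1 = invs L2" unfolding Q_def
        by (rule swp_invs_dec[OF dL(2)]) (use Ld kk d1 in \<open>auto simp: L1_def L2_def swp_upd nth_list_update\<close>)
      have Qd: "distinct Q" "set Q = {0..<n}" using Ld by (auto simp: Q_def L2_def L1_def)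
      obtain v where v: "v \<in> lists (gens n)" "P n v = Q" "length v = invs Q"
        using exists_word[OF Qd] by blast
      have Q2: "Q = swp (Suc k) (swp k (swp (Suc k) L))"
        unfolding Q_def L2_def L1_def by (rule swp_braid) (use Ld kk in auto)
      have P1: "P n (v @ [i, j]) = P n u"
        using v(2) Pu kk by (simp add: P_append Q_def L2_def L1_def)
      have P2: "P n (v @ [j, i]) = P n u'"
        using v(2) Pu' kk Q2 by (simp add: P_append)
      have vl: "v @ [i, j] \<in> lists (gens n)" "v @ [j, i] \<in> lists (gens n)" using v i j by auto
      have lv: "length (v @ [i, j]) = length u" "length (v @ [j, i]) = length u"
        using e1 e2 e3 iL v(3) by auto
      have a1: "(u, v @ [i, j]) \<in> braid_eq n"
        by (rule ih) (use u vl P1 iu lv lw in auto)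
      have iu2: "invs (P n u') = length u'"
        using swp_invs_dec[of L "j - 1"] Ld kk dj Pu' iL lu by simp
      have a2: "(u', v @ [j, i]) \<in> braid_eq n"
        by (rule ih) (use u' vl P2 iu2 lv lw lu in auto)
      have "(u @ [i], v @ [i, j, i]) \<in> braid_eq n"
        using beq_app_right[OF a1, of "[i]"] i by simp
      moreover have "(v @ [i, j, i], v @ [j, i, j]) \<in> braid_eq n"
        using beq_stepI[of v n "[]" "[i, j, i]" "[j, i, j]"] v i j ji
        by (auto simp: braid_rel_def)
      moreover have "(v @ [j, i, j], u' @ [j]) \<in> braid_eq n"
        using beq_sym[OF beq_app_right[OF a2, of "[j]"]] j by simp
      ultimately show "(u @ [i], u' @ [j]) \<in> braid_eq n"
        using beq_trans by blast
    qed
    consider "i = j" | "Suc i < j \<or> Suc j < i" | "j = Suc i" | "i = Suc j" by linarith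
    then show ?thesis
    proof cases
      case 1
      have "(u, u') \<in> braid_eq n"
        by (rule ih) (use ul Pu iu lenu lw 1 in auto)
      then show ?thesis using beq_app_right[of u u' n "[i]"] ul snoc w' 1 by auto
    next
      case 2
      define Q where "Q = swp (j - 1) (swp (i - 1) L)"
      have ij: "1 \<le> i" "i < n" "1 \<le> j" "j < n" using ul by (auto simp: gens_iff)
      have Q2: "Q = swp (i - 1) (swp (j - 1) L)"
        unfolding Q_def by (rule swp_comm) (use Ld ij 2 in auto)
      have e1: "invs (swp (i - 1) L) + 1 = invs L"
        by (rule swp_invs_dec) (use Ld ij iu in auto)
      have e2: "invs Q + 1 = invs (swp (i - 1) L)" unfolding Q_def
        by (rule swp_invs_dec[OF swp_distinct[THEN iffD2, OF Ld(1)]]) (use Ld ij iu' 2 in \<open>auto simp: swp_upd nth_list_update\<close>)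
      have Qd: "distinct Q" "set Q = {0..<n}" using Ld by (auto simp: Q_def)
      obtain v where v: "v \<in> lists (gens n)" "P n v = Q" "length v = invs Q"
        using exists_word[OF Qd] by blast
      have P1: "P n (v @ [j]) = P n u" using v(2) Pu by (simp add: Q_def)
      have P2: "P n (v @ [i]) = P n u'" using v(2) Pu Q2 by simp
      have vl: "v @ [j] \<in> lists (gens n)" "v @ [i] \<in> lists (gens n)" using v ul by auto
      have lv: "length (v @ [j]) = length u" "length (v @ [i]) = length u"
        using e1 e2 invL v(3) by auto
      have a1: "(u, v @ [j]) \<in> braid_eq n"
        by (rule ih) (use ul vl P1 iu lv lw in auto)
      have a2: "(u', v @ [i]) \<in> braid_eq n"
        by (rule ih) (use ul vl P2 iu' lv lw lenu in auto)
      have "(u @ [i], v @ [j, i]) \<in> braid_eq n"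
        using beq_app_right[OF a1, of "[i]"] ul by simp
      moreover have "(v @ [j, i], v @ [i, j]) \<in> braid_eq n"
        using beq_stepI[of v n "[]" "[j, i]" "[i, j]"] v ul 2
        by (auto simp: braid_rel_def)
      moreover have "(v @ [i, j], u' @ [j]) \<in> braid_eq n"
        using beq_sym[OF beq_app_right[OF a2, of "[j]"]] ul by simp
      ultimately show ?thesis using snoc w' beq_trans by blast
    next
      case 3
      show ?thesis unfolding snoc w'
        by (rule three) (use ul Pu lenu iu invL lw iu' 3 in auto)
    next
      case 4
      have "(u' @ [j], u @ [i]) \<in> braid_eq n"
        by (rule three) (use ul Pu lenu iu' invL lw iu 4 in auto)
      then show ?thesis unfolding snoc w' by (rule beq_sym)
    qed
  qed
qed



lemma act_upt1: "m < length L \<Longrightarrow> act [1..<Suc m] L = take m (drop 1 L) @ L ! 0 # drop (Suc m) L"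
proof (induction m)
  case 0
  then show ?case by (cases L) auto
next
  case (Suc m)
  have IH: "act [1..<Suc m] L = take m (drop 1 L) @ L ! 0 # drop (Suc m) L" using Suc by simp
  have d: "drop (Suc m) L = L ! Suc m # drop (Suc (Suc m)) L" using Suc.prems by (simp add: Cons_nth_drop_Suc)
  have lt: "length (take m (drop 1 L)) = m" using Suc.prems by simp
  have "act [1..<Suc (Suc m)] L = swp m (act [1..<Suc m] L)" by simp
  also have "\<dots> = take m (drop 1 L) @ swp 0 (L ! 0 # drop (Suc m) L)"
    using swp_append[of "take m (drop 1 L)" 0 "L ! 0 # drop (Suc m) L"] IH lt by simp
  also have "\<dots> = take (Suc m) (drop 1 L) @ L ! 0 # drop (Suc (Suc m)) L"
    using d Suc.prems by (simp add: take_Suc_conv_app_nth)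
  finally show ?case .
qed

lemma act_Delta: "m \<le> length L \<Longrightarrow> act (Delta m) L = rev (take m L) @ drop m L"
proof (induction m arbitrary: L)
  case 0
  then show ?case by simp
next
  case (Suc m)
  define L' where "L' = take m (drop 1 L) @ L ! 0 # drop (Suc m) L"
  have a: "act [1..<Suc m] L = L'" using act_upt1[of m L] Suc.prems by (simp add: L'_def)
  have lL': "length L' = length L" using Suc.prems by (simp add: L'_def)
  have "act (Delta (Suc m)) L = act (Delta m) L'" using a by simp
  also have "\<dots> = rev (take m L') @ drop m L'" using Suc.IH lL' Suc.prems by simp
  also have "\<dots> = rev (take (Suc m) L) @ drop (Suc m) L"
    using Suc.prems by (cases L) (auto simp: L'_def min_def)
  finally show ?case .
qed

lemma act_rev_upt1: "m < length L \<Longrightarrow> act (rev [1..<Suc m]) L = L ! m # take m L @ drop (Suc m) L"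
proof (induction m arbitrary: L)
  case 0
  then show ?case by (cases L) auto
next
  case (Suc m)
  define L' where "L' = swp m L"
  have L'u: "L' = L[m := L ! Suc m, Suc m := L ! m]" using Suc.prems by (simp add: L'_def swp_upd)
  have dd: "drop (Suc m) (L[m := L ! Suc m, Suc m := L ! m]) = L ! m # drop (Suc (Suc m)) L"
    using Suc.prems by (subst Cons_nth_drop_Suc[symmetric]) auto
  have "act (rev [1..<Suc (Suc m)]) L = act (rev [1..<Suc m]) L'" by (simp add: L'_def)
  also have "\<dots> = L' ! m # take m L' @ drop (Suc m) L'" using Suc by (simp add: L'_def)
  also have "\<dots> = L ! Suc m # take (Suc m) L @ drop (Suc (Suc m)) L"
    using Suc.prems dd unfolding L'u
    by (simp add: nth_list_update take_Suc_conv_app_nth Cons_nth_drop_Suc drop_update_cancel)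
  finally show ?case .
qed

lemma act_rev_Delta: "m \<le> length L \<Longrightarrow> act (rev (Delta m)) L = rev (take m L) @ drop m L"
proof (induction m arbitrary: L)
  case 0
  then show ?case by simp
next
  case (Suc m)
  define L' where "L' = rev (take m L) @ drop m L"
  have "act (rev (Delta (Suc m))) L = act (rev [1..<Suc m]) (act (rev (Delta m)) L)" by simp
  also have "\<dots> = act (rev [1..<Suc m]) L'" using Suc by (simp add: L'_def)
  also have "\<dots> = L' ! m # take m L' @ drop (Suc m) L'"
    by (rule act_rev_upt1) (use Suc.prems in \<open>simp add: L'_def\<close>)
  also have "\<dots> = rev (take (Suc m) L) @ drop (Suc m) L"
    using Suc.prems by (simp add: L'_def nth_append take_Suc_conv_app_nth min_def)
  finally show ?case .
qed



lemma P_Delta: "m \<le> n \<Longrightarrow> P n (Delta m) = rev [0..<m] @ [m..<n]"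
  by (simp add: P_def act_Delta)

lemma P_rev_Delta: "m \<le> n \<Longrightarrow> P n (rev (Delta m)) = rev [0..<m] @ [m..<n]"
  by (simp add: P_def act_rev_Delta)

lemma Delta_set: "set (Delta m) \<subseteq> {1..<m}"
  by (induction m) auto

lemma Delta_lists: "m \<le> n \<Longrightarrow> Delta m \<in> lists (gens n)"
  using Delta_set[of m] by (auto simp: gens_def)

lemma invs_append_less: "(\<forall>x\<in>set xs. \<forall>y\<in>set ys. x < y) \<Longrightarrow> invs (xs @ ys) = invs xs + invs ys"
proof (induction xs)
  case (Cons a xs)
  then have "filter (\<lambda>y. y < a) ys = []" by (auto simp: filter_empty_conv)
  then show ?case using Cons by simp
qed simp

lemma invs_rev_upt: "invs (rev [0..<m]) = length (Delta m)"
proof (induction m)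
  case (Suc m)
  have "filter (\<lambda>y. y < m) (rev [0..<m]) = rev [0..<m]" by (simp add: filter_id_conv)
  then show ?case using Suc by simp
qed simp

lemma red_Delta: "m \<le> n \<Longrightarrow> invs (P n (Delta m)) = length (Delta m)"
  "m \<le> n \<Longrightarrow> invs (P n (rev (Delta m))) = length (rev (Delta m))"
  by (simp_all add: P_Delta P_rev_Delta invs_append_less sorted_invs invs_rev_upt)

lemma invs_le_sq: "invs L \<le> length L * length L"
proof (induction L)
  case (Cons x xs)
  have "length (filter (\<lambda>y. y < x) xs) \<le> length xs" by (rule length_filter_le)
  then have "invs (x # xs) \<le> length xs + length xs * length xs" using add_le_mono[OF _ Cons.IH] by simp
  then show ?case by simp
qed simp

lemma extend:
  "x \<in> lists (gens n) \<Longrightarrow> invs (P n x) = length x \<Longrightarrow>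
   \<exists>z \<in> lists (gens n). invs (P n (x @ z)) = length (x @ z) \<and> P n (x @ z) = rev [0..<n]"
proof (induction "n * n - length x" arbitrary: x rule: less_induct)
  case less
  show ?case
  proof (cases "\<exists>k. Suc k < n \<and> P n x ! k < P n x ! Suc k")
    case True
    then obtain k where k: "Suc k < n" "P n x ! k < P n x ! Suc k" by blast
    have inc: "invs (P n (x @ [Suc k])) = invs (P n x) + 1"
      using swp_invs_inc[of "P n x" k] k by simp
    have xl: "x @ [Suc k] \<in> lists (gens n)" using less.prems k by (auto simp: gens_iff)
    have bound: "length (x @ [Suc k]) \<le> n * n"
      using invs_le_sq[of "P n (x @ [Suc k])"] inc less.prems by simp
    have "\<exists>z \<in> lists (gens n). invs (P n ((x @ [Suc k]) @ z)) = length ((x @ [Suc k]) @ z) \<and> P n ((x @ [Suc k]) @ z) = rev [0..<n]"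
      by (rule less.hyps) (use bound inc less.prems xl in auto)
    then obtain z where z: "z \<in> lists (gens n)" "invs (P n ((x @ [Suc k]) @ z)) = length ((x @ [Suc k]) @ z)"
      "P n ((x @ [Suc k]) @ z) = rev [0..<n]" by blast
    have zz: "x @ (Suc k # z) = (x @ [Suc k]) @ z" by simp
    show ?thesis using z k unfolding zz[symmetric] by (intro bexI[of _ "Suc k # z"]) (auto simp: gens_iff)
  next
    case False
    then have "sorted (rev (P n x))"
      unfolding sorted_rev_iff_nth_Suc by (metis P_length not_less)
    then have "rev (P n x) = [0..<n]"
      by (intro sorted_distinct_set_unique) auto
    then have "P n x = rev [0..<n]" by (metis rev_rev_ident)
    then show ?thesis using less.prems by (intro bexI[of _ "[]"]) auto
  qed
qed

lemma simple_iff: "simple n x \<longleftrightarrow> x \<in> lists (gens n) \<and> invs (P n x) = length x"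
proof
  assume "simple n x"
  then obtain z where z: "x \<in> lists (gens n)" "z \<in> lists (gens n)" "(x @ z, Delta n) \<in> braid_eq n"
    unfolding simple_def left_div_def by blast
  have e: "length (x @ z) = length (Delta n)" "P n (x @ z) = P n (Delta n)"
    using beq_inv[OF z(3)] by (auto simp: P_def)
  have "invs (P n (x @ z)) = length (x @ z)" using e red_Delta[of n n] by simp
  moreover have "invs (P n (x @ z)) \<le> invs (P n x) + length z" using P_app_invs_le z by blast
  moreover have "invs (P n x) \<le> length x" using P_invs_le z by blast
  ultimately show "x \<in> lists (gens n) \<and> invs (P n x) = length x" using z by simp
next
  assume a: "x \<in> lists (gens n) \<and> invs (P n x) = length x"
  then obtain z where z: "z \<in> lists (gens n)" "invs (P n (x @ z)) = length (x @ z)" "P n (x @ z) = rev [0..<n]"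
    using extend by blast
  have "(x @ z, Delta n) \<in> braid_eq n"
    by (rule matsumoto) (use a z red_Delta[of n n] P_Delta[of n n] Delta_lists[of n n] in auto)
  then show "simple n x" using a z unfolding simple_def left_div_def by blast
qed

lemma right_div_iff:
  assumes y: "y \<in> lists (gens n)" "invs (P n y) = length y" and i: "i \<in> gens n"
  shows "right_div n [i] y \<longleftrightarrow> P n y ! (i - 1) > P n y ! i"
proof
  assume "right_div n [i] y"
  then obtain z where z: "z \<in> lists (gens n)" "(z @ [i], y) \<in> braid_eq n"
    unfolding right_div_def by blast
  have e: "length (z @ [i]) = length y" "P n (z @ [i]) = P n y"
    using beq_inv[OF z(2)] by (auto simp: P_def)
  have "P n (z @ [i]) ! (i - 1) > P n (z @ [i]) ! i"
    by (rule reduced_snoc(3)) (use z i e y in auto)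
  then show "P n y ! (i - 1) > P n y ! i" using e by simp
next
  assume d: "P n y ! (i - 1) > P n y ! i"
  have i': "1 \<le> i" "i < n" using i by (auto simp: gens_iff)
  define Q where "Q = swp (i - 1) (P n y)"
  have dec: "invs Q + 1 = invs (P n y)" unfolding Q_def
    by (rule swp_invs_dec) (use i' d in auto)
  have Qd: "distinct Q" "set Q = {0..<n}" by (auto simp: Q_def)
  obtain z where z: "z \<in> lists (gens n)" "P n z = Q" "length z = invs Q"
    using exists_word[OF Qd] by blast
  have "(z @ [i], y) \<in> braid_eq n"
    by (rule matsumoto) (use z i y dec in \<open>auto simp: Q_def\<close>)
  then show "right_div n [i] y" using z unfolding right_div_def by blast
qed

lemma DL_Delta: assumes "m < n" shows "DL n (Delta m) = {1..<m}"
proof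
  show "DL n (Delta m) \<subseteq> {1..<m}"
  proof
    fix i assume "i \<in> DL n (Delta m)"
    then obtain z where "([i] @ z, Delta m) \<in> braid_eq n"
      unfolding DL_def left_div_def by blast
    then have "set ([i] @ z) = set (Delta m)" using beq_inv by blast
    then show "i \<in> {1..<m}" using Delta_set[of m] by auto
  qed
next
  show "{1..<m} \<subseteq> DL n (Delta m)"
  proof
    fix i assume im: "i \<in> {1..<m}"
    then have ig: "i \<in> gens n" using assms by (auto simp: gens_iff)
    have "right_div n [i] (rev (Delta m))"
    proof (subst right_div_iff)
      show "rev (Delta m) \<in> lists (gens n)" using Delta_lists[of m n] assms by (simp add: in_lists_conv_set)
      show "invs (P n (rev (Delta m))) = length (rev (Delta m))" using red_Delta assms by simp
      show "i \<in> gens n" by fact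
      show "P n (rev (Delta m)) ! i < P n (rev (Delta m)) ! (i - 1)"
        using im assms by (simp add: P_rev_Delta nth_append rev_nth; arith)
    qed
    then obtain z where z: "z \<in> lists (gens n)" "(z @ [i], rev (Delta m)) \<in> braid_eq n"
      unfolding right_div_def by blast
    have "([i] @ rev z, Delta m) \<in> braid_eq n" using beq_rev[OF z(2)] by simp
    then have "left_div n [i] (Delta m)" using z(1) unfolding left_div_def by auto
    then show "i \<in> DL n (Delta m)" using ig unfolding DL_def by blast
  qed
qed



lemma card_kernel:
  assumes "\<And>x y. x \<in> X \<Longrightarrow> y \<in> X \<Longrightarrow> f x = f y \<longleftrightarrow> g x = g y"
  shows "card (f ` X) = card (g ` X)"
proof -
  define h where "h v = f (SOME x. x \<in> X \<and> g x = v)" for v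
  have hg: "h (g x) = f x" if "x \<in> X" for x
  proof -
    have "\<exists>x'. x' \<in> X \<and> g x' = g x" using that by blast
    then have "(SOME x'. x' \<in> X \<and> g x' = g x) \<in> X \<and> g (SOME x'. x' \<in> X \<and> g x' = g x) = g x"
      by (rule someI_ex)
    then show ?thesis using assms that unfolding h_def by blast
  qed
  have "f ` X = h ` (g ` X)" using hg by (auto simp: image_image)
  moreover have "inj_on h (g ` X)"
    by (auto simp: inj_on_def hg assms)
  ultimately show ?thesis by (simp add: card_image)
qed

lemma desc_iff:
  assumes "distinct L" "m \<le> length L"
  shows "(\<forall>k. Suc k < m \<longrightarrow> L ! Suc k < L ! k) \<longleftrightarrow> sorted (rev (take m L))"
proof -
  have "sorted (rev (take m L)) \<longleftrightarrow> (\<forall>k. Suc k < m \<longrightarrow> L ! Suc k \<le> L ! k)"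
    unfolding sorted_rev_iff_nth_Suc using assms by auto
  moreover have "L ! Suc k \<noteq> L ! k" if "Suc k < m" for k
    using assms that by (simp add: nth_eq_iff_index_eq)
  ultimately show ?thesis by (meson le_less less_imp_le)
qed

lemma card_D:
  assumes "m + r = n"
  shows "card {L. distinct L \<and> set L = {0..<n} \<and> (\<forall>k. Suc k < m \<longrightarrow> L ! Suc k < L ! k)} = fact n div fact (n - r)"
proof -
  define D where "D = {L. distinct L \<and> set L = {0..<n} \<and> (\<forall>k. Suc k < m \<longrightarrow> L ! Suc k < L ! k)}"
  define T where "T = {ys. length ys = r \<and> distinct ys \<and> set ys \<subseteq> {0..<n}}"
  have Dalt: "D = {L. distinct L \<and> set L = {0..<n} \<and> sorted (rev (take m L))}"
    unfolding D_def
  proof (intro Collect_cong)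
    fix L
    show "(distinct L \<and> set L = {0..<n} \<and> (\<forall>k. Suc k < m \<longrightarrow> L ! Suc k < L ! k)) =
          (distinct L \<and> set L = {0..<n} \<and> sorted (rev (take m L)))"
    proof (cases "distinct L \<and> set L = {0..<n}")
      case True
      then have "m \<le> length L" using perm_length assms by fastforce
      then show ?thesis using desc_iff True by blast
    qed blast
  qed
  have bij: "bij_betw (drop m) D T"
  proof (rule bij_betw_imageI)
    show "inj_on (drop m) D"
    proof (rule inj_onI)
      fix L1 L2 assume L1: "L1 \<in> D" and L2: "L2 \<in> D" and eq: "drop m L1 = drop m L2"
      have l: "length L1 = n" "length L2 = n" using L1 L2 perm_length unfolding D_def by auto
      have s: "set (take m L1) = {0..<n} - set (drop m L1)" "set (take m L2) = {0..<n} - set (drop m L2)"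
      proof -
        have g: "set (take m L) = {0..<n} - set (drop m L)" if "L \<in> D" for L
        proof -
          have "set (take m L) \<union> set (drop m L) = {0..<n}" using that unfolding D_def
            by (metis (mono_tags, lifting) mem_Collect_eq set_append append_take_drop_id)
          moreover have "set (take m L) \<inter> set (drop m L) = {}"
            using that unfolding D_def by (simp add: set_take_disj_set_drop_if_distinct)
          ultimately show ?thesis by blast
        qed
        show "set (take m L1) = {0..<n} - set (drop m L1)" "set (take m L2) = {0..<n} - set (drop m L2)"
          using g L1 L2 by auto
      qed
      have "rev (take m L1) = rev (take m L2)"
        by (rule sorted_distinct_set_unique) (use L1 L2 s eq in \<open>auto simp: Dalt\<close>)
      then show "L1 = L2" using eq by (metis append_take_drop_id rev_rev_ident)
    qed
  next
    show "drop m ` D = T"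
    proof
      show "drop m ` D \<subseteq> T"
        using assms perm_length unfolding D_def T_def by (auto dest: in_set_dropD)
    next
      show "T \<subseteq> drop m ` D"
      proof
        fix ys assume ys: "ys \<in> T"
        define A where "A = {0..<n} - set ys"
        define L where "L = rev (sorted_list_of_set A) @ ys"
        have cA: "card A = m" using ys assms unfolding A_def T_def
          by (simp add: card_Diff_subset distinct_card)
        have lA: "length (sorted_list_of_set A) = m" using cA by (simp add: A_def)
        have "drop m L = ys" using lA by (simp add: L_def)
        moreover have "L \<in> D" unfolding Dalt
          using ys lA by (auto simp: L_def A_def T_def)
        ultimately show "ys \<in> drop m ` D" by (metis image_eqI)
      qed
    qed
  qed
  have "card D = card T" using bij_betw_same_card[OF bij] .
  also have "card T = \<Prod>{n - r + 1..n}"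
    unfolding T_def using card_lists_distinct_length_eq[of "{0..<n}" r] assms by simp
  also have "\<dots> = fact n div fact (n - r)"
    using fact_div_fact[of "n - r" n] assms by simp
  finally show ?thesis unfolding D_def .
qed



lemma cls_eq: "(y, y') \<in> braid_eq n \<Longrightarrow> braid_cls n y = braid_cls n y'"
  unfolding braid_cls_def using beq_sym beq_trans by blast

lemma cls_iff: "x \<in> lists (gens n) \<Longrightarrow> y \<in> lists (gens n) \<Longrightarrow> braid_cls n x = braid_cls n y \<longleftrightarrow> (x, y) \<in> braid_eq n"
proof
  assume "x \<in> lists (gens n)" "y \<in> lists (gens n)" "braid_cls n x = braid_cls n y"
  then have "y \<in> braid_cls n x" unfolding braid_cls_def by auto
  then show "(x, y) \<in> braid_eq n" unfolding braid_cls_def by auto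
qed (rule cls_eq)

lemma DL_eq: "(y, y') \<in> braid_eq n \<Longrightarrow> DL n y = DL n y'"
  unfolding DL_def left_div_def using beq_sym beq_trans by blast

theorem proposition4p4:
  fixes n r :: nat
  assumes "1 \<le> r" and "r \<le> n"
  shows "b n 2 (Delta (n - r)) = fact n div fact (n - r)"
proof -
  define m where "m = n - r"
  have mn: "m < n" "m + r = n" using assms by (auto simp: m_def)
  define c0 where "c0 = braid_cls n (Delta m)"
  define X where "X = {x \<in> lists (gens n). invs (P n x) = length x \<and> {1..<m} \<subseteq> DR n x}"
  define D where "D = {L. distinct L \<and> set L = {0..<n} \<and> (\<forall>k. Suc k < m \<longrightarrow> L ! Suc k < L ! k)}"
  have DLm: "DL n (Delta m) = {1..<m}" using DL_Delta mn by blast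
  have sD: "simple n (Delta m)" using simple_iff Delta_lists red_Delta mn by simp
  have S: "{map (braid_cls n) ws | ws. length ws = 2 \<and> normal_seq n ws \<and> (last ws, Delta m) \<in> braid_eq n}
     = (\<lambda>c. [c, c0]) ` (braid_cls n ` X)"
  proof (intro equalityI subsetI)
    fix s assume "s \<in> {map (braid_cls n) ws | ws. length ws = 2 \<and> normal_seq n ws \<and> (last ws, Delta m) \<in> braid_eq n}"
    then obtain ws where ws: "s = map (braid_cls n) ws" "length ws = 2" "normal_seq n ws" "(last ws, Delta m) \<in> braid_eq n"
      by blast
    then obtain x y where xy: "ws = [x, y]"
      by (metis (no_types, opaque_lifting) One_nat_def Suc_1 length_0_conv length_Suc_conv)
    have sx: "simple n x" and dd: "DL n y \<subseteq> DR n x" and ye: "(y, Delta m) \<in> braid_eq n"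
      using ws(3,4) unfolding xy normal_seq_def by (auto dest: spec[of _ 0])
    have "x \<in> X" using sx dd DL_eq[OF ye] DLm unfolding X_def simple_iff by auto
    moreover have "braid_cls n y = c0" using cls_eq[OF ye] unfolding c0_def .
    ultimately show "s \<in> (\<lambda>c. [c, c0]) ` (braid_cls n ` X)" using ws(1) xy by auto
  next
    fix s assume "s \<in> (\<lambda>c. [c, c0]) ` (braid_cls n ` X)"
    then obtain x where x: "x \<in> X" "s = [braid_cls n x, c0]" by auto
    have "normal_seq n [x, Delta m]"
      unfolding normal_seq_def using x(1) sD DLm
      by (auto simp: X_def simple_iff less_Suc_eq)
    then show "s \<in> {map (braid_cls n) ws | ws. length ws = 2 \<and> normal_seq n ws \<and> (last ws, Delta m) \<in> braid_eq n}"
      using x(2) unfolding c0_def by (intro CollectI exI[of _ "[x, Delta m]"]) auto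
  qed
  have c1: "card ((\<lambda>c. [c, c0]) ` (braid_cls n ` X)) = card (braid_cls n ` X)"
    by (rule card_image) (auto simp: inj_on_def)
  have c2: "card (braid_cls n ` X) = card (P n ` X)"
  proof (rule card_kernel)
    fix x y assume x: "x \<in> X" and y: "y \<in> X"
    have xl: "x \<in> lists (gens n)" "invs (P n x) = length x" using x by (auto simp: X_def)
    have yl: "y \<in> lists (gens n)" "invs (P n y) = length y" using y by (auto simp: X_def)
    show "braid_cls n x = braid_cls n y \<longleftrightarrow> P n x = P n y"
    proof -
      have "(x, y) \<in> braid_eq n \<longleftrightarrow> P n x = P n y"
      proof
        assume "(x, y) \<in> braid_eq n"
        then show "P n x = P n y" using beq_inv by (auto simp: P_def)
      next
        assume "P n x = P n y"
        then show "(x, y) \<in> braid_eq n"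
          by (intro matsumoto) (use xl yl in auto)
      qed
      then show ?thesis using cls_iff xl yl by blast
    qed
  qed
  have c3: "P n ` X = D"
  proof (intro equalityI subsetI)
    fix L assume "L \<in> P n ` X"
    then obtain x where x: "x \<in> X" "L = P n x" by blast
    have xl: "x \<in> lists (gens n)" "invs (P n x) = length x" "{1..<m} \<subseteq> DR n x" using x by (auto simp: X_def)
    have "L ! Suc k < L ! k" if "Suc k < m" for k
    proof -
      have "Suc k \<in> DR n x" using xl that by auto
      then have "right_div n [Suc k] x" "Suc k \<in> gens n" unfolding DR_def by auto
      then show ?thesis using right_div_iff[OF xl(1,2)] x(2) by fastforce
    qed
    then show "L \<in> D" unfolding D_def using x by auto
  next
    fix L assume L: "L \<in> D"
    then obtain x where x: "x \<in> lists (gens n)" "P n x = L" "length x = invs L"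
      using exists_word unfolding D_def by blast
    have "{1..<m} \<subseteq> DR n x"
    proof
      fix i assume i: "i \<in> {1..<m}"
      then have ig: "i \<in> gens n" using mn by (auto simp: gens_iff)
      have k: "Suc (i - 1) < m" "Suc (i - 1) = i" using i by auto
      have "L ! Suc (i - 1) < L ! (i - 1)" using L k(1) unfolding D_def by blast
      then have "L ! i < L ! (i - 1)" using k(2) by simp
      then have "right_div n [i] x" using right_div_iff[of x n i] x ig by simp
      then show "i \<in> DR n x" using ig unfolding DR_def by blast
    qed
    then show "L \<in> P n ` X" using x unfolding X_def by auto
  qed
  have "b n 2 (Delta m) = card ((\<lambda>c. [c, c0]) ` (braid_cls n ` X))"
    unfolding b_def S ..
  also have "\<dots> = card D" using c1 c2 c3 by simp
  also have "\<dots> = fact n div fact (n - r)" unfolding D_def by (rule card_D[OF mn(2)])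
  finally show ?thesis unfolding m_def .
qed


end
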